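(* Consider an interface between two cells $i$ and $j$ in a two-point flux finite-volume discretization of incompressible, immiscible multiphase flow with phases $\ell \in \{1,\dots,n_p\}$. Let $T>0$ be the interface transmissibility, and for each phase $\ell$ let $\lambda_{\ell,i}\ge 0$ and $\lambda_{\ell,j}\ge 0$ be the (fixed) phase mobilities in cells $i$ and $j$, $g_\ell$ a fixed phase gravity potential difference across the interface, and $D_\ell>0$ a fixed normalization constant. Treat the phase pressure differences $\Delta p_1,\dots,\Delta p_{n_p}$ across the interface as variables, and set $\Delta\Phi_\ell = \Delta p_\ell - g_\ell$. For a scaling coefficient $\gamma_\ell\in\mathbb{R}$ define $$\beta_\ell = \frac12 + \frac{1}{\pi}\arctan\!\Big(\gamma_\ell\,\frac{\Delta\Phi_\ell}{D_\ell}\Big),\qquad \lambda_\ell^{WA} = \beta_\ell\,\lambda_{\ell,i} + (1-\beta_\ell)\,\lambda_{\ell,j},$$ and the total velocity $$u_t = T\sum_{m=1}^{n_p} \lambda_m^{WA}\,\Delta\Phi_m .$$ If $\gamma_\ell \ge 0$, then $\dfrac{\partial u_t}{\partial \Delta p_\ell} \ge 0$.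
   Context: This is the weighted-averaging (WA) treatment of flow mobilities in a total velocity formulation. In the paper, $D_\ell = |g_{ij,ref}| + |c_{\ell,ref}|$ where $g_{ij,ref}=\max_\ell(\rho_{\ell,s})\, g\,\Delta z_{ij}$ is a reference gravity potential difference (with surface phase densities $\rho_{\ell,s}$) and $c_{\ell,ref}=p_{\ell,cap}(0.8)-p_{\ell,cap}(0.2)$ a reference capillary pressure difference; both are constants, assumed here to have positive sum. Differences are taken as $\Delta\bullet = \bullet_i - \bullet_j$. The mobilities are held fixed (they depend on saturations, not on pressures). *)

theory Defs
  imports Complex_Main
begin

text \<open>Phases are indexed by 0..np-1. Phase pressure differences dp, gravity
potential differences g, normalisation constants D, scaling coefficients gam and
cell mobilities lam_i, lam_j are functions of the phase index.\<close>

definition wa_beta :: "real \<Rightarrow> real \<Rightarrow> real \<Rightarrow> real" where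
  "wa_beta gam D dPhi = 1/2 + arctan (gam * dPhi / D) / pi"

definition wa_mob :: "real \<Rightarrow> real \<Rightarrow> real \<Rightarrow> real \<Rightarrow> real \<Rightarrow> real" where
  "wa_mob lami lamj gam D dPhi =
     wa_beta gam D dPhi * lami + (1 - wa_beta gam D dPhi) * lamj"

definition total_velocity ::
  "nat \<Rightarrow> real \<Rightarrow> (nat \<Rightarrow> real) \<Rightarrow> (nat \<Rightarrow> real) \<Rightarrow> (nat \<Rightarrow> real)
    \<Rightarrow> (nat \<Rightarrow> real) \<Rightarrow> (nat \<Rightarrow> real) \<Rightarrow> (nat \<Rightarrow> real) \<Rightarrow> real" where
  "total_velocity np T lami lamj g D gam dp =
     T * (\<Sum>m<np. wa_mob (lami m) (lamj m) (gam m) (D m) (dp m - g m) * (dp m - g m))"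

end

theory Submission imports Defs begin

lemma arctan_lb: assumes "(y::real) \<ge> 0" shows "y/(1+y^2) \<le> arctan y"
proof -
  have "(\<lambda>t. arctan t - t/(1+t^2)) 0 \<le> (\<lambda>t. arctan t - t/(1+t^2)) y"
  proof (rule DERIV_nonneg_imp_nondecreasing[OF assms])
    fix x :: real
    have p: "1 + x^2 > 0" by (simp add: add_pos_nonneg)
    have "DERIV (\<lambda>t. arctan t - t/(1+t^2)) x :> inverse (1+x^2) - ((1+x^2) - x*(2*x))/((1+x^2)^2)"
      using p by (auto intro!: derivative_eq_intros DERIV_arctan[THEN DERIV_chain2] simp: power2_eq_square)
    moreover have "inverse (1+x^2) - ((1+x^2) - x*(2*x))/((1+x^2)^2) = 2*x^2/(1+x^2)^2"
    proof -
      have "inverse (1+x^2) = (1+x^2)/(1+x^2)^2" using p by (simp add: power2_eq_square inverse_eq_divide)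
      then have "inverse (1+x^2) - ((1+x^2) - x*(2*x))/((1+x^2)^2) = ((1+x^2) - ((1+x^2) - x*(2*x)))/(1+x^2)^2"
        by (simp add: diff_divide_distrib)
      then show ?thesis by (simp add: power2_eq_square)
    qed
    ultimately show "\<exists>d. DERIV (\<lambda>t. arctan t - t/(1+t^2)) x :> d \<and> d \<ge> 0" by auto
  qed
  then show ?thesis by simp
qed

lemma k_le: "arctan (a::real) + a/(1+a^2) \<le> pi/2"
proof (cases "a > 0")
  case True
  have "arctan (1/a) = pi/2 - arctan a" using arctan_inverse[of a] True by simp
  moreover have "(1/a)/(1+(1/a)^2) \<le> arctan (1/a)" by (rule arctan_lb) (use True in simp)
  moreover have "(1/a)/(1+(1/a)^2) = a/(1+a^2)" using True by (simp add: field_simps power2_eq_square)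
  ultimately show ?thesis by linarith
next
  case False
  hence "arctan a \<le> 0" by simp
  moreover have "a/(1+a^2) \<le> 0" using False by (simp add: divide_nonpos_pos add_pos_nonneg)
  moreover have "pi > 0" by simp
  ultimately show ?thesis by linarith
qed

lemma B_bounds: "0 \<le> 1/2 + (arctan (a::real) + a/(1+a^2))/pi \<and> 1/2 + (arctan (a::real) + a/(1+a^2))/pi \<le> 1"
proof -
  have u: "arctan a + a/(1+a^2) \<le> pi/2" by (rule k_le)
  have "arctan (-a) + (-a)/(1+(-a)^2) \<le> pi/2" by (rule k_le)
  hence l: "-(pi/2) \<le> arctan a + a/(1+a^2)" by (simp add: arctan_minus)
  show ?thesis using u l pi_gt_zero by (auto simp: field_simps)
qed

lemma term_deriv:
  fixes li lj c D g y :: real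
  assumes D: "D > 0"
  defines "a \<equiv> c * (y - g) / D"
  shows "((\<lambda>x. wa_mob li lj c D (x - g) * (x - g)) has_real_derivative
           (lj + (li - lj) * (1/2 + (arctan a + a/(1+a^2))/pi))) (at y)"
proof -
  have p: "1 + a^2 > 0" by (simp add: add_pos_nonneg)
  show ?thesis
    unfolding wa_mob_def wa_beta_def
    using D apply (auto intro!: derivative_eq_intros DERIV_arctan[THEN DERIV_chain2])
    apply (fold a_def)
  proof -
    have e1: "(inverse (1 + a^2) * c * li / (D * pi) - inverse (1 + a^2) * c * lj / (D * pi)) * (y - g)
       = (li - lj) * (a / (1 + a^2)) / pi"
    proof -
      have "(inverse (1 + a^2) * c * li / (D * pi) - inverse (1 + a^2) * c * lj / (D * pi)) * (y - g)
         = (li - lj) * (inverse (1 + a^2) * (c * (y - g) / D)) / pi"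
        by (simp add: divide_inverse algebra_simps)
      also have "\<dots> = (li - lj) * (a / (1 + a^2)) / pi"
        unfolding a_def[symmetric] by (simp add: inverse_eq_divide)
      finally show ?thesis .
    qed
    show "(inverse (1 + a^2) * c * li / (D * pi) - inverse (1 + a^2) * c * lj / (D * pi)) * (y - g) +
     ((1 / 2 + arctan a / pi) * li + (1 / 2 - arctan a / pi) * lj) =
     lj + (li - lj) * (1 / 2 + (arctan a + a / (1 + a^2)) / pi)"
      unfolding e1 by (simp add: algebra_simps add_divide_distrib diff_divide_distrib)
  qed
qed

theorem mainTheorem1:
  fixes np :: nat and T :: real and l :: nat
    and lami lamj g D gam dp :: "nat \<Rightarrow> real"
  assumes "l < np"
    and "T > 0"
    and "\<And>m. m < np \<Longrightarrow> lami m \<ge> 0"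
    and "\<And>m. m < np \<Longrightarrow> lamj m \<ge> 0"
    and "\<And>m. m < np \<Longrightarrow> D m > 0"
    and "gam l \<ge> 0"
  shows "\<exists>d. ((\<lambda>x. total_velocity np T lami lamj g D gam (dp(l := x)))
              has_real_derivative d) (at (dp l)) \<and> d \<ge> 0"
proof -
  define F where "F m z = wa_mob (lami m) (lamj m) (gam m) (D m) (z - g m) * (z - g m)" for m z
  define C where "C = (\<Sum>m\<in>{..<np} - {l}. F m (dp m))"
  define a where "a = gam l * (dp l - g l) / D l"
  define B where "B = 1/2 + (arctan a + a/(1+a^2))/pi"
  have eq: "(\<lambda>x. total_velocity np T lami lamj g D gam (dp(l := x))) = (\<lambda>x. T * (F l x + C))"
  proof
    fix x
    have "(\<Sum>m<np. F m ((dp(l := x)) m)) = F l ((dp(l := x)) l) + (\<Sum>m\<in>{..<np} - {l}. F m ((dp(l := x)) m))"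
      by (rule sum.remove) (use assms(1) in auto)
    also have "(\<Sum>m\<in>{..<np} - {l}. F m ((dp(l := x)) m)) = C"
      unfolding C_def by (rule sum.cong) auto
    finally show "total_velocity np T lami lamj g D gam (dp(l := x)) = T * (F l x + C)"
      unfolding total_velocity_def F_def by simp
  qed
  have dF: "(F l has_real_derivative (lamj l + (lami l - lamj l) * B)) (at (dp l))"
    unfolding F_def[abs_def] B_def a_def
    by (rule term_deriv) (use assms(5)[OF assms(1)] in simp)
  have "((\<lambda>x. T * (F l x + C)) has_real_derivative T * ((lamj l + (lami l - lamj l) * B) + 0)) (at (dp l))"
    by (intro DERIV_cmult DERIV_add dF DERIV_const)
  moreover have "T * ((lamj l + (lami l - lamj l) * B) + 0) \<ge> 0"
  proof -
    have b: "0 \<le> B" "B \<le> 1" using B_bounds[of a] unfolding B_def by auto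
    have "lamj l + (lami l - lamj l) * B = (1 - B) * lamj l + B * lami l" by (simp add: algebra_simps)
    also have "\<dots> \<ge> 0" using b assms(3,4)[OF assms(1)] by simp
    finally show ?thesis using assms(2) by simp
  qed
  ultimately show ?thesis unfolding eq by blast
qed

end
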